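(* Let $G$ be a group with a finite generating set $S$, equipped with the word metric $d_S$, and suppose $G$ acts transitively by isometries on a metric space $M$. Fix a basepoint $x_0 \in M$. Suppose that $M$ has asymptotic property C and that there is an integer $n \ge 0$ such that for every $R > 0$, the quasi-stabilizer $W_R(x_0)$ (with the metric restricted from $d_S$) has asymptotic dimension at most $n$. Then $G$ (with the metric $d_S$) has straight finite decomposition complexity.
   Context: The word metric on $G$ with respect to the finite generating set $S$ is $d_S(g,h) = $ the length of a shortest word in $S \cup S^{-1}$ representing $g^{-1}h$. A family $\mathcal{F}$ of subsets of a metric space $X$ is uniformly bounded if there is $R>0$ with $\mathrm{diam}(F) < R$ for all $F \in \mathcal{F}$; for $r>0$, $\mathcal{F}$ is $r$-disjoint if $d(F_1,F_2) > r$ for all distinct $F_1, F_2 \in \mathcal{F}$. A metric space $X$ has asymptotic dimension at most $n$ if for every $r>0$ there exist $n+1$ uniformly bounded, $r$-disjoint families $\mathcal{F}_0,\dots,\mathcal{F}_n$ of subsets of $X$ whose union covers $X$. A metric space $X$ has asymptotic property C if for every sequence of real numbers $0<r_0<r_1<\cdots$ there exist $m \in \mathbb{N}$ and uniformly bounded families $\mathcal{F}_0,\dots,\mathcal{F}_m$ of subsets of $X$ such that each $\mathcal{F}_i$ is $r_i$-disjoint and $\bigcup_{i=0}^m \mathcal{F}_i$ covers $X$. For a group $G$ acting by isometries on $M$, $x \in M$ and $R>0$, the $R$-quasi-stabilizer of $x$ is $W_R(x) = \{ g \in G \mid d_M(x, gx) \le R\}$. For metric families (families of metric spaces) $\mathcal{X},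 \mathcal{Y}$ and $r>0$, $\mathcal{X}$ is $r$-decomposable over $\mathcal{Y}$ if for each $X \in \mathcal{X}$ there exist $r$-disjoint families $\mathcal{U}, \mathcal{V}$ of subsets of $X$ (with the induced metrics) such that $\mathcal{U}\cup\mathcal{V}$ covers $X$ and $\mathcal{U}\cup\mathcal{V} \subseteq \mathcal{Y}$. A metric family $\mathcal{X}$ has straight finite decomposition complexity (sFDC) if for every sequence $0 \le r_1 \le r_2 \le \cdots$ of real numbers there exist $n \in \mathbb{N}$ and metric families $\mathcal{X} = \mathcal{X}_0, \mathcal{X}_1, \dots, \mathcal{X}_n$ such that for each $1 \le i \le n$, $\mathcal{X}_i$ is $r_i$-decomposable over $\mathcal{X}_{i-1}$, and $\mathcal{X}_n$ is uniformly bounded (there is a uniform bound on the diameters of its members). A single metric space $X$ has sFDC if the family $\{X\}$ does. *)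

theory Defs
  imports "HOL-Analysis.Abstract_Metric_Spaces" "HOL-Library.Extended_Real"
          "HOL-Algebra.Group_Action" "HOL-Algebra.Generated_Groups"
begin

definition word_prod :: "('a, 'b) monoid_scheme \<Rightarrow> 'a list \<Rightarrow> 'a" where
  "word_prod G ws = foldr (\<lambda>a b. a \<otimes>\<^bsub>G\<^esub> b) ws \<one>\<^bsub>G\<^esub>"

definition word_length :: "('a, 'b) monoid_scheme \<Rightarrow> 'a set \<Rightarrow> 'a \<Rightarrow> nat" where
  "word_length G S x = (LEAST k. \<exists>ws. length ws = k \<and>
      set ws \<subseteq> S \<union> (\<lambda>s. inv\<^bsub>G\<^esub> s) ` S \<and> word_prod G ws = x)"

definition word_dist :: "('a, 'b) monoid_scheme \<Rightarrow> 'a set \<Rightarrow> 'a \<Rightarrow> 'a \<Rightarrow> real" where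
  "word_dist G S g h = real (word_length G S (inv\<^bsub>G\<^esub> g \<otimes>\<^bsub>G\<^esub> h))"

text \<open>Distance between sets: d(A,B) = inf of d(x,y), valued in ereal (inf of empty = \<infinity>).\<close>
definition set_dist :: "('a \<Rightarrow> 'a \<Rightarrow> real) \<Rightarrow> 'a set \<Rightarrow> 'a set \<Rightarrow> ereal" where
  "set_dist d A B = Inf {ereal (d x y) | x y. x \<in> A \<and> y \<in> B}"

definition unif_bounded :: "('a \<Rightarrow> 'a \<Rightarrow> real) \<Rightarrow> 'a set set \<Rightarrow> bool" where
  "unif_bounded d \<F> \<longleftrightarrow> (\<exists>R>0. \<forall>F\<in>\<F>. \<forall>x\<in>F. \<forall>y\<in>F. d x y < R)"

definition r_disjoint :: "('a \<Rightarrow> 'a \<Rightarrow> real) \<Rightarrow> real \<Rightarrow> 'a set set \<Rightarrow> bool" where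
  "r_disjoint d r \<F> \<longleftrightarrow>
     (\<forall>F1\<in>\<F>. \<forall>F2\<in>\<F>. F1 \<noteq> F2 \<longrightarrow> set_dist d F1 F2 > ereal r)"

definition asdim_le :: "('a \<Rightarrow> 'a \<Rightarrow> real) \<Rightarrow> 'a set \<Rightarrow> nat \<Rightarrow> bool" where
  "asdim_le d X n \<longleftrightarrow>
     (\<forall>r>0. \<exists>\<F> :: nat \<Rightarrow> 'a set set.
        (\<forall>i\<le>n. unif_bounded d (\<F> i) \<and> r_disjoint d r (\<F> i) \<and> (\<forall>F\<in>\<F> i. F \<subseteq> X))
        \<and> X \<subseteq> (\<Union>i\<le>n. \<Union>(\<F> i)))"

definition asymptotic_property_C :: "('a \<Rightarrow> 'a \<Rightarrow> real) \<Rightarrow> 'a set \<Rightarrow> bool" where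
  "asymptotic_property_C d X \<longleftrightarrow>
     (\<forall>r :: nat \<Rightarrow> real. 0 < r 0 \<and> strict_mono r \<longrightarrow>
        (\<exists>m. \<exists>\<F> :: nat \<Rightarrow> 'a set set.
           (\<forall>i\<le>m. unif_bounded d (\<F> i) \<and> r_disjoint d (r i) (\<F> i) \<and> (\<forall>F\<in>\<F> i. F \<subseteq> X))
           \<and> X \<subseteq> (\<Union>i\<le>m. \<Union>(\<F> i))))"

definition r_decomposable ::
    "('a \<Rightarrow> 'a \<Rightarrow> real) \<Rightarrow> real \<Rightarrow> 'a set set \<Rightarrow> 'a set set \<Rightarrow> bool" where
  "r_decomposable d r \<X> \<Y> \<longleftrightarrow>
     (\<forall>X\<in>\<X>. \<exists>\<U> \<V>. r_disjoint d r \<U> \<and> r_disjoint d r \<V> \<and>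
        (\<forall>F\<in>\<U> \<union> \<V>. F \<subseteq> X) \<and> X \<subseteq> \<Union>(\<U> \<union> \<V>) \<and> \<U> \<union> \<V> \<subseteq> \<Y>)"

text \<open>Straight finite decomposition complexity of a metric family (r indexed from 1; r 0 unused).\<close>
definition sFDC_family :: "('a \<Rightarrow> 'a \<Rightarrow> real) \<Rightarrow> 'a set set \<Rightarrow> bool" where
  "sFDC_family d \<X> \<longleftrightarrow>
     (\<forall>r :: nat \<Rightarrow> real. 0 \<le> r 1 \<and> (\<forall>i\<ge>1. r i \<le> r (Suc i)) \<longrightarrow>
        (\<exists>n. \<exists>\<XX> :: nat \<Rightarrow> 'a set set. \<XX> 0 = \<X> \<and>
           (\<forall>i\<in>{1..n}. r_decomposable d (r i) (\<XX> (i - 1)) (\<XX> i)) \<and>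
           unif_bounded d (\<XX> n)))"

definition sFDC :: "('a \<Rightarrow> 'a \<Rightarrow> real) \<Rightarrow> 'a set \<Rightarrow> bool" where
  "sFDC d X \<longleftrightarrow> sFDC_family d {X}"

definition quasi_stabilizer ::
    "('a, 'c) monoid_scheme \<Rightarrow> ('a \<Rightarrow> 'b \<Rightarrow> 'b) \<Rightarrow> ('b \<Rightarrow> 'b \<Rightarrow> real) \<Rightarrow> real \<Rightarrow> 'b \<Rightarrow> 'a set" where
  "quasi_stabilizer G \<phi> dM R x = {g \<in> carrier G. dM x (\<phi> g x) \<le> R}"

end

theory Submission
  imports Defs
begin


lemma set_dist_mono:
  assumes "A \<subseteq> A'" "B \<subseteq> B'"
  shows "set_dist d A' B' \<le> set_dist d A B"
  unfolding set_dist_def using assms by (intro Inf_superset_mono) blast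

lemma set_dist_lb:
  assumes "\<And>x y. x \<in> A \<Longrightarrow> y \<in> B \<Longrightarrow> c \<le> d x y"
  shows "ereal c \<le> set_dist d A B"
  unfolding set_dist_def using assms by (intro Inf_greatest) auto

lemma r_disjoint_single: "r_disjoint d r {A}"
  unfolding r_disjoint_def by auto

lemma r_disjoint_empty: "r_disjoint d r {}"
  unfolding r_disjoint_def by auto

lemma r_disjoint_restrict:
  assumes "r_disjoint d r C"
  shows "r_disjoint d r {A \<inter> Y | A. A \<in> C}"
  unfolding r_disjoint_def
proof (intro ballI impI)
  fix F1 F2 assume "F1 \<in> {A \<inter> Y | A. A \<in> C}" "F2 \<in> {A \<inter> Y | A. A \<in> C}" "F1 \<noteq> F2"
  then obtain A B where AB: "A \<in> C" "B \<in> C" "F1 = A \<inter> Y" "F2 = B \<inter> Y" "A \<noteq> B" by blast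
  have "ereal r < set_dist d A B" using assms AB unfolding r_disjoint_def by blast
  also have "\<dots> \<le> set_dist d F1 F2" using AB by (intro set_dist_mono) auto
  finally show "ereal r < set_dist d F1 F2" .
qed

lemma peel:
  fixes d :: "'a \<Rightarrow> 'a \<Rightarrow> real" and C :: "nat \<Rightarrow> 'a set set"
  assumes C: "\<forall>t<N. unif_bounded d (C t) \<and> r_disjoint d (r (Suc t)) (C t)"
    and cov: "X \<subseteq> (\<Union>t<N. \<Union>(C t))"
  shows "\<exists>XX. XX 0 = {X} \<and> (\<forall>i\<in>{1..N}. r_decomposable d (r i) (XX (i-1)) (XX i))
             \<and> unif_bounded d (XX N)"
proof -
  define R where "R t = X - (\<Union>s<t. \<Union>(C s))" for t
  define XX where "XX t = insert (R t) {A \<inter> R s | A s. s < t \<and> A \<in> C s}" for t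
  have "XX 0 = {X}" unfolding XX_def R_def by auto
  moreover have "r_decomposable d (r i) (XX (i-1)) (XX i)" if i: "i \<in> {1..N}" for i
  proof -
    obtain t where t: "i = Suc t" "t < N" using i by (cases i) auto
    have RS: "R (Suc t) = R t - \<Union>(C t)" unfolding R_def by (auto simp: lessThan_Suc)
    show ?thesis unfolding r_decomposable_def t
    proof
      fix Y assume Y: "Y \<in> XX (Suc t - 1)"
      show "\<exists>\<U> \<V>. r_disjoint d (r (Suc t)) \<U> \<and> r_disjoint d (r (Suc t)) \<V> \<and>
           (\<forall>F\<in>\<U> \<union> \<V>. F \<subseteq> Y) \<and> Y \<subseteq> \<Union> (\<U> \<union> \<V>) \<and> \<U> \<union> \<V> \<subseteq> XX (Suc t)"
      proof (cases "Y = R t")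
        case True
        show ?thesis
        proof (intro exI conjI)
          show "r_disjoint d (r (Suc t)) {A \<inter> R t | A. A \<in> C t}"
            using C t by (intro r_disjoint_restrict) auto
          show "r_disjoint d (r (Suc t)) {R (Suc t)}" by (rule r_disjoint_single)
          show "\<forall>F\<in>{A \<inter> R t | A. A \<in> C t} \<union> {R (Suc t)}. F \<subseteq> Y"
            using True RS by auto
          show "Y \<subseteq> \<Union> ({A \<inter> R t | A. A \<in> C t} \<union> {R (Suc t)})"
            using True RS by auto
          show "{A \<inter> R t | A. A \<in> C t} \<union> {R (Suc t)} \<subseteq> XX (Suc t)"
            unfolding XX_def by blast
        qed
      next
        case False
        then obtain A s where As: "Y = A \<inter> R s" "s < t" "A \<in> C s"
          using Y unfolding XX_def by auto
        show ?thesis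
        proof (intro exI conjI)
          show "r_disjoint d (r (Suc t)) {Y}" by (rule r_disjoint_single)
          show "r_disjoint d (r (Suc t)) {}" by (rule r_disjoint_empty)
          show "\<forall>F\<in>{Y} \<union> {}. F \<subseteq> Y" by auto
          show "Y \<subseteq> \<Union> ({Y} \<union> {})" by auto
          show "{Y} \<union> {} \<subseteq> XX (Suc t)" unfolding XX_def using As by auto
        qed
      qed
    qed
  qed
  moreover have "unif_bounded d (XX N)"
  proof -
    have "\<forall>t. \<exists>R. t < N \<longrightarrow> R > 0 \<and> (\<forall>F\<in>C t. \<forall>x\<in>F. \<forall>y\<in>F. d x y < R)"
      using C unfolding unif_bounded_def by blast
    then obtain B where B: "\<And>t. t < N \<Longrightarrow> B t > 0 \<and> (\<forall>F\<in>C t. \<forall>x\<in>F. \<forall>y\<in>F. d x y < B t)"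
      by metis
    have RN: "R N = {}" unfolding R_def using cov by auto
    have le: "B t \<le> (\<Sum>s<N. B s)" if "t < N" for t
      using B that by (intro member_le_sum) (auto simp: less_imp_le)
    show ?thesis unfolding unif_bounded_def
    proof (intro exI[of _ "(\<Sum>s<N. B s) + 1"] conjI ballI)
      show "0 < (\<Sum>s<N. B s) + 1" using B sum_nonneg[of "{..<N}" B] by (smt (verit) lessThan_iff less_imp_le)
      fix F x y assume F: "F \<in> XX N" and xy: "x \<in> F" "y \<in> F"
      then obtain A s where As: "F = A \<inter> R s" "s < N" "A \<in> C s"
        using RN unfolding XX_def by auto
      have "d x y < B s" using B As xy by blast
      then show "d x y < (\<Sum>s<N. B s) + 1" using le[OF As(2)] by linarith
    qed
  qed
  ultimately show ?thesis by blast
qed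



lemma word_prod_Nil[simp]: "word_prod G [] = \<one>\<^bsub>G\<^esub>"
  by (simp add: word_prod_def)

lemma word_prod_Cons[simp]: "word_prod G (a # ws) = a \<otimes>\<^bsub>G\<^esub> word_prod G ws"
  by (simp add: word_prod_def)

lemma word_prod_closed:
  assumes "group G" "set ws \<subseteq> carrier G"
  shows "word_prod G ws \<in> carrier G"
proof -
  interpret group G by fact
  show ?thesis using assms(2) by (induction ws) auto
qed

lemma word_prod_append:
  assumes "group G" "set ws1 \<subseteq> carrier G" "set ws2 \<subseteq> carrier G"
  shows "word_prod G (ws1 @ ws2) = word_prod G ws1 \<otimes>\<^bsub>G\<^esub> word_prod G ws2"
proof -
  interpret group G by fact
  show ?thesis using assms(2)
  proof (induction ws1)
    case Nil then show ?case using word_prod_closed[OF assms(1) assms(3)] by simp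
  next
    case (Cons a ws1)
    then show ?case
      using word_prod_closed[OF assms(1) assms(3)] word_prod_closed[OF assms(1), of ws1]
      by (simp add: m_assoc)
  qed
qed

lemma gen_word:
  assumes "group G" "S \<subseteq> carrier G" "x \<in> generate G S"
  shows "\<exists>ws. set ws \<subseteq> S \<union> (\<lambda>s. inv\<^bsub>G\<^esub> s) ` S \<and> word_prod G ws = x"
proof -
  interpret group G by fact
  show ?thesis using assms(3)
proof (induction rule: generate.induct)
  case one
  show ?case by (intro exI[of _ "[]"]) simp
next
  case (incl h)
  show ?case using incl assms r_one by (intro exI[of _ "[h]"]) auto
next
  case (inv h)
  show ?case using inv.hyps assms r_one inv_closed
    by (intro exI[of _ "[inv\<^bsub>G\<^esub> h]"]) auto
next
  case (eng h1 h2)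
  then obtain ws1 ws2 where w: "set ws1 \<subseteq> S \<union> (\<lambda>s. inv\<^bsub>G\<^esub> s) ` S" "word_prod G ws1 = h1"
    "set ws2 \<subseteq> S \<union> (\<lambda>s. inv\<^bsub>G\<^esub> s) ` S" "word_prod G ws2 = h2" by blast
  have sub: "S \<union> (\<lambda>s. inv\<^bsub>G\<^esub> s) ` S \<subseteq> carrier G"
    using assms inv_closed by auto
  show ?case using w sub word_prod_append[OF assms(1), of ws1 ws2]
    by (intro exI[of _ "ws1 @ ws2"]) auto
qed
qed

lemma word_length_ex:
  assumes "group G" "S \<subseteq> carrier G" "generate G S = carrier G" "x \<in> carrier G"
  shows "\<exists>ws. length ws = word_length G S x \<and> set ws \<subseteq> S \<union> (\<lambda>s. inv\<^bsub>G\<^esub> s) ` S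
            \<and> word_prod G ws = x"
proof -
  have "\<exists>k ws. length ws = k \<and> set ws \<subseteq> S \<union> (\<lambda>s. inv\<^bsub>G\<^esub> s) ` S \<and> word_prod G ws = x"
    using gen_word[OF assms(1,2)] assms(3,4) by blast
  then show ?thesis unfolding word_length_def by (rule LeastI_ex)
qed

lemma word_dist_nonneg: "0 \<le> word_dist G S a b"
  by (simp add: word_dist_def)

lemma word_dist_left:
  assumes "group G" "g \<in> carrier G" "a \<in> carrier G" "b \<in> carrier G"
  shows "word_dist G S (g \<otimes>\<^bsub>G\<^esub> a) (g \<otimes>\<^bsub>G\<^esub> b) = word_dist G S a b"
proof -
  interpret group G by fact
  have "inv\<^bsub>G\<^esub> (g \<otimes>\<^bsub>G\<^esub> a) \<otimes>\<^bsub>G\<^esub> (g \<otimes>\<^bsub>G\<^esub> b) = inv\<^bsub>G\<^esub> a \<otimes>\<^bsub>G\<^esub> b"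
    using assms by (simp add: inv_mult_group m_assoc[symmetric]) (simp add: m_assoc)
  then show ?thesis by (simp add: word_dist_def)
qed

lemma act_one:
  assumes "group_action G M \<phi>" "x \<in> M"
  shows "\<phi> \<one>\<^bsub>G\<^esub> x = x"
  using group_action.id_eq_one[OF assms(1)] assms(2) by (metis restrict_apply')

lemma act_closed:
  assumes "group_action G M \<phi>" "g \<in> carrier G" "x \<in> M"
  shows "\<phi> g x \<in> M"
  using group_action.element_image[OF assms] by blast

lemma orbit_word:
  assumes grp: "group G" and act: "group_action G M \<phi>" and ms: "Metric_space M dM"
    and iso: "\<forall>g\<in>carrier G. \<forall>x\<in>M. \<forall>y\<in>M. dM (\<phi> g x) (\<phi> g y) = dM x y"
    and x0: "x0 \<in> M" and S: "S \<subseteq> carrier G" "finite S"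
    and ws: "set ws \<subseteq> S \<union> (\<lambda>s. inv\<^bsub>G\<^esub> s) ` S"
  shows "dM x0 (\<phi> (word_prod G ws) x0) \<le> (\<Sum>s\<in>S. dM x0 (\<phi> s x0)) * length ws"
  using ws
proof (induction ws)
  case Nil
  then show ?case using act_one[OF act x0] Metric_space.zero[OF ms x0 x0] by simp
next
  case (Cons a ws)
  interpret group G by fact
  define L where "L = (\<Sum>s\<in>S. dM x0 (\<phi> s x0))"
  have sub: "S \<union> (\<lambda>s. inv\<^bsub>G\<^esub> s) ` S \<subseteq> carrier G" using S by auto
  have a: "a \<in> carrier G" using Cons.prems sub by auto
  have wc: "word_prod G ws \<in> carrier G" using word_prod_closed[OF grp] Cons.prems sub by auto
  have wx: "\<phi> (word_prod G ws) x0 \<in> M" using act_closed[OF act wc x0] .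
  have ax: "\<phi> a x0 \<in> M" using act_closed[OF act a x0] .
  have aL: "dM x0 (\<phi> a x0) \<le> L"
  proof -
    have "\<exists>s\<in>S. dM x0 (\<phi> a x0) = dM x0 (\<phi> s x0)"
    proof (cases "a \<in> S")
      case True then show ?thesis by blast
    next
      case False
      then obtain s where s: "s \<in> S" "a = inv\<^bsub>G\<^esub> s" using Cons.prems by auto
      have sc: "s \<in> carrier G" using s S by auto
      have "\<phi> s (\<phi> a x0) = x0"
        using s sc act_one[OF act x0]
        by (metis group_action.composition_rule[OF act x0] inv_closed r_inv)
      then have "dM (\<phi> s x0) (\<phi> s (\<phi> a x0)) = dM (\<phi> s x0) x0" by simp
      moreover have "dM (\<phi> s x0) (\<phi> s (\<phi> a x0)) = dM x0 (\<phi> a x0)" using iso sc x0 ax by blast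
      ultimately show ?thesis using s Metric_space.commute[OF ms] by metis
    qed
    then obtain s where s: "s \<in> S" "dM x0 (\<phi> a x0) = dM x0 (\<phi> s x0)" by blast
    show ?thesis unfolding L_def s(2) using s(1) S(2) Metric_space.nonneg[OF ms]
      by (intro member_le_sum) auto
  qed
  have "dM x0 (\<phi> (word_prod G (a # ws)) x0) = dM x0 (\<phi> a (\<phi> (word_prod G ws) x0))"
    using group_action.composition_rule[OF act x0 a wc] by simp
  also have "\<dots> \<le> dM x0 (\<phi> a x0) + dM (\<phi> a x0) (\<phi> a (\<phi> (word_prod G ws) x0))"
    using Metric_space.triangle[OF ms x0 ax act_closed[OF act a wx]] .
  also have "dM (\<phi> a x0) (\<phi> a (\<phi> (word_prod G ws) x0)) = dM x0 (\<phi> (word_prod G ws) x0)"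
    using iso a x0 wx by blast
  also have "dM x0 (\<phi> a x0) + dM x0 (\<phi> (word_prod G ws) x0) \<le> L + L * length ws"
    using aL Cons.IH Cons.prems L_def by (intro add_mono) auto
  finally show ?case by (simp add: L_def algebra_simps)
qed

lemma orbit_lipschitz:
  assumes grp: "group G" and act: "group_action G M \<phi>" and ms: "Metric_space M dM"
    and iso: "\<forall>g\<in>carrier G. \<forall>x\<in>M. \<forall>y\<in>M. dM (\<phi> g x) (\<phi> g y) = dM x y"
    and x0: "x0 \<in> M" and S: "S \<subseteq> carrier G" "finite S" and gen: "generate G S = carrier G"
    and gh: "g \<in> carrier G" "h \<in> carrier G"
  shows "dM (\<phi> g x0) (\<phi> h x0) \<le> (\<Sum>s\<in>S. dM x0 (\<phi> s x0)) * word_dist G S g h"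
proof -
  interpret group G by fact
  define w where "w = inv\<^bsub>G\<^esub> g \<otimes>\<^bsub>G\<^esub> h"
  have wc: "w \<in> carrier G" using gh by (simp add: w_def)
  obtain ws where ws: "length ws = word_length G S w" "set ws \<subseteq> S \<union> (\<lambda>s. inv\<^bsub>G\<^esub> s) ` S"
    "word_prod G ws = w" using word_length_ex[OF grp S(1) gen wc] by blast
  have "h = g \<otimes>\<^bsub>G\<^esub> w" using gh by (simp add: w_def m_assoc[symmetric])
  then have "\<phi> h x0 = \<phi> g (\<phi> w x0)" using group_action.composition_rule[OF act x0 gh(1) wc] by simp
  then have "dM (\<phi> g x0) (\<phi> h x0) = dM x0 (\<phi> w x0)"
    using iso gh x0 act_closed[OF act wc x0] by simp
  also have "\<dots> \<le> (\<Sum>s\<in>S. dM x0 (\<phi> s x0)) * length ws"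
    using orbit_word[OF grp act ms iso x0 S ws(2)] ws(3) by simp
  finally show ?thesis using ws(1) by (simp add: word_dist_def w_def)
qed



lemma set_dist_le_pt:
  "x \<in> A \<Longrightarrow> y \<in> B \<Longrightarrow> set_dist d A B \<le> ereal (d x y)"
  unfolding set_dist_def by (intro Inf_lower) blast

lemma set_dist_ge:
  assumes "\<And>x y. x \<in> A \<Longrightarrow> y \<in> B \<Longrightarrow> e \<le> ereal (d x y)"
  shows "e \<le> set_dist d A B"
  unfolding set_dist_def using assms by (intro Inf_greatest) auto

lemma mono_from1:
  fixes r :: "nat \<Rightarrow> real"
  assumes "\<forall>i\<ge>1. r i \<le> r (Suc i)" "1 \<le> i" "i \<le> k"
  shows "r i \<le> r k"
  using assms(3)
proof (induction k rule: dec_induct)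
  case base then show ?case by simp
next
  case (step k)
  then show ?case using assms(1,2) by (meson order_trans le_trans)
qed

theorem mainTheorem2:
  fixes G :: "('a, 'c) monoid_scheme" and S :: "'a set"
    and M :: "'b set" and dM :: "'b \<Rightarrow> 'b \<Rightarrow> real"
    and \<phi> :: "'a \<Rightarrow> 'b \<Rightarrow> 'b" and x0 :: 'b and n :: nat
  assumes "group G"
    and "finite S" and "S \<subseteq> carrier G" and "generate G S = carrier G"
    and "Metric_space M dM"
    and "group_action G M \<phi>"
    and "\<forall>g\<in>carrier G. \<forall>x\<in>M. \<forall>y\<in>M. dM (\<phi> g x) (\<phi> g y) = dM x y"
    and "\<forall>x\<in>M. \<forall>y\<in>M. \<exists>g\<in>carrier G. \<phi> g x = y"
    and "x0 \<in> M"
    and "asymptotic_property_C dM M"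
    and "\<forall>R>0. asdim_le (word_dist G S) (quasi_stabilizer G \<phi> dM R x0) n"
  shows "sFDC (word_dist G S) (carrier G)"
proof -
  note grp = assms(1) and Sfin = assms(2) and Ssub = assms(3) and gen = assms(4)
    and ms = assms(5) and act = assms(6) and iso = assms(7) and x0 = assms(9)
    and propC = assms(10) and asd = assms(11)
  interpret group G by fact
  define wd where "wd = word_dist G S"
  define L where "L = (\<Sum>s\<in>S. dM x0 (\<phi> s x0)) + 1"
  have L0: "(\<Sum>s\<in>S. dM x0 (\<phi> s x0)) \<ge> 0" using Metric_space.nonneg[OF ms] by (simp add: sum_nonneg)
  have Lpos: "L > 0" using L0 by (simp add: L_def)
  have lip: "dM (\<phi> g x0) (\<phi> h x0) \<le> L * wd g h" if "g \<in> carrier G" "h \<in> carrier G" for g h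
  proof -
    have "dM (\<phi> g x0) (\<phi> h x0) \<le> (\<Sum>s\<in>S. dM x0 (\<phi> s x0)) * wd g h"
      using orbit_lipschitz[OF grp act ms iso x0 Ssub Sfin gen that] by (simp add: wd_def)
    also have "\<dots> \<le> L * wd g h" unfolding L_def using word_dist_nonneg[of G S g h]
      by (intro mult_right_mono) (auto simp: wd_def)
    finally show ?thesis .
  qed
  show ?thesis unfolding sFDC_def sFDC_family_def
  proof (intro allI impI)
    fix r :: "nat \<Rightarrow> real"
    assume r: "0 \<le> r 1 \<and> (\<forall>i\<ge>1. r i \<le> r (Suc i))"
    have rmono: "r i \<le> r k" if "1 \<le> i" "i \<le> k" for i k
      using mono_from1[of r i k] r that by blast
    have rnn: "0 \<le> r i" if "1 \<le> i" for i using rmono[of 1 i] r that by linarith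
    define K where "K j = Suc j * Suc n" for j
    have K1: "1 \<le> K j" for j by (simp add: K_def)
    define \<rho> where "\<rho> j = r (K j) + 1" for j
    define s where "s j = L * (r (K j) + 1) + real j + 1" for j
    have \<rho>pos: "\<rho> j > 0" for j using rnn[OF K1] by (simp add: \<rho>_def) (smt (verit) rnn[OF K1[of j]])
    have smono: "strict_mono s"
    proof (rule strict_mono_Suc_iff[THEN iffD2], intro allI)
      fix j
      have "r (K j) \<le> r (K (Suc j))" using K1 by (intro rmono) (auto simp: K_def)
      then have "L * (r (K j) + 1) \<le> L * (r (K (Suc j)) + 1)" using Lpos by simp
      then show "s j < s (Suc j)" by (simp add: s_def)
    qed
    have s0: "0 < s 0" using rnn[OF K1[of 0]] Lpos by (simp add: s_def) (smt (verit) mult_nonneg_nonneg)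
    have exF: "\<exists>m. \<exists>F :: nat \<Rightarrow> 'b set set. (\<forall>i\<le>m. unif_bounded dM (F i) \<and> r_disjoint dM (s i) (F i) \<and> (\<forall>A\<in>F i. A \<subseteq> M))
           \<and> M \<subseteq> (\<Union>i\<le>m. \<Union>(F i))"
      using propC[unfolded asymptotic_property_C_def, rule_format, OF conjI[OF s0 smono]] .
    obtain m and F :: "nat \<Rightarrow> 'b set set" where
      F: "\<forall>i\<le>m. unif_bounded dM (F i) \<and> r_disjoint dM (s i) (F i) \<and> (\<forall>A\<in>F i. A \<subseteq> M)"
      and Fcov: "M \<subseteq> (\<Union>i\<le>m. \<Union>(F i))"
      using exF by (elim exE conjE)
    have "\<forall>j. \<exists>R. j \<le> m \<longrightarrow> R > 0 \<and> (\<forall>A\<in>F j. \<forall>x\<in>A. \<forall>y\<in>A. dM x y < R)"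
    proof (intro allI)
      fix j
      show "\<exists>R. j \<le> m \<longrightarrow> R > 0 \<and> (\<forall>A\<in>F j. \<forall>x\<in>A. \<forall>y\<in>A. dM x y < R)"
      proof (cases "j \<le> m")
        case True
        then have "unif_bounded dM (F j)" using F by simp
        then show ?thesis unfolding unif_bounded_def using True by simp
      qed simp
    qed
    from choice[OF this] obtain D where D0: "\<forall>j. j \<le> m \<longrightarrow> D j > 0 \<and> (\<forall>A\<in>F j. \<forall>x\<in>A. \<forall>y\<in>A. dM x y < D j)"
      by (elim exE)
    note D = D0[rule_format]
    define W where "W j = quasi_stabilizer G \<phi> dM (D j) x0" for j
    define QE where "QE j Ej \<longleftrightarrow> (\<forall>i\<le>n. unif_bounded wd (Ej i) \<and> r_disjoint wd (\<rho> j) (Ej i) \<and> (\<forall>B\<in>Ej i. B \<subseteq> W j))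
        \<and> W j \<subseteq> (\<Union>i\<le>n. \<Union>(Ej i))" for j and Ej :: "nat \<Rightarrow> 'a set set"
    have Eex: "\<exists>Ej. QE j Ej" if jm: "j \<le> m" for j
    proof -
      have "asdim_le wd (W j) n" using asd D[OF jm] unfolding W_def wd_def by simp
      then have "\<exists>Ej :: nat \<Rightarrow> 'a set set. (\<forall>i\<le>n. unif_bounded wd (Ej i) \<and> r_disjoint wd (\<rho> j) (Ej i) \<and> (\<forall>B\<in>Ej i. B \<subseteq> W j))
        \<and> W j \<subseteq> (\<Union>i\<le>n. \<Union>(Ej i))"
        unfolding asdim_le_def by (drule_tac spec[of _ "\<rho> j"]) (simp add: \<rho>pos)
      then show ?thesis unfolding QE_def .
    qed
    define E where "E j = (SOME Ej. QE j Ej)" for j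
    have E: "(\<forall>i\<le>n. unif_bounded wd (E j i) \<and> r_disjoint wd (\<rho> j) (E j i) \<and> (\<forall>B\<in>E j i. B \<subseteq> W j))
        \<and> W j \<subseteq> (\<Union>i\<le>n. \<Union>(E j i))" if jm: "j \<le> m" for j
    proof -
      have "QE j (E j)" unfolding E_def using Eex[OF jm] by (rule someI_ex)
      then show ?thesis unfolding QE_def .
    qed
    have Eub: "unif_bounded wd (E j i)" if "j \<le> m" "i \<le> n" for j i
      using conjunct1[OF E[OF that(1)]] that(2) by blast
    have Edis: "r_disjoint wd (\<rho> j) (E j i)" if "j \<le> m" "i \<le> n" for j i
      using conjunct1[OF E[OF that(1)]] that(2) by blast
    have Esub: "B \<subseteq> W j" if "j \<le> m" "i \<le> n" "B \<in> E j i" for j i B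
      using conjunct1[OF E[OF that(1)]] that(2,3) by blast
    have Ecov: "W j \<subseteq> (\<Union>i\<le>n. \<Union>(E j i))" if "j \<le> m" for j
      using conjunct2[OF E[OF that(1)]] .
    define gF where "gF A = (SOME g. g \<in> carrier G \<and> \<phi> g x0 \<in> A)" for A
    define P where "P A = {g \<in> carrier G. \<phi> g x0 \<in> A}" for A
    have gF: "gF A \<in> carrier G \<and> \<phi> (gF A) x0 \<in> A" if "g \<in> P A" for g A
    proof -
      have "\<exists>g. g \<in> carrier G \<and> \<phi> g x0 \<in> A" using that by (auto simp: P_def)
      from someI_ex[OF this] show ?thesis unfolding gF_def .
    qed
    define C where "C t = {(\<lambda>e. gF A \<otimes>\<^bsub>G\<^esub> e) ` B \<inter> P A | A B.
        A \<in> F (t div Suc n) \<and> B \<in> E (t div Suc n) (t mod Suc n)}" for t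
    define N where "N = Suc m * Suc n"
    have tj: "t div Suc n \<le> m" if "t < N" for t
      using that less_mult_imp_div_less[of t "Suc m" "Suc n"] by (simp add: N_def)
    have tk: "t mod Suc n \<le> n" for t by (simp add: less_Suc_eq_le)
    have tK: "Suc t \<le> K (t div Suc n)" for t
    proof -
      have e: "t = t div Suc n * Suc n + t mod Suc n" by (rule div_mult_mod_eq[symmetric])
      have l: "t mod Suc n < Suc n" by simp
      have "K (t div Suc n) = t div Suc n * Suc n + Suc n" by (simp add: K_def)
      then show ?thesis using e l by linarith
    qed
    have Wc: "W j \<subseteq> carrier G" for j unfolding W_def quasi_stabilizer_def by auto
    have CW: "B \<subseteq> carrier G" if t: "t < N" and B: "B \<in> E (t div Suc n) (t mod Suc n)" for t B
    proof -
      show ?thesis using Esub[OF tj[OF t] tk[of t] B] Wc by blast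
    qed
    have Cb: "unif_bounded wd (C t)" if t: "t < N" for t
    proof -
      obtain R where R: "R > 0" "\<forall>B\<in>E (t div Suc n) (t mod Suc n). \<forall>x\<in>B. \<forall>y\<in>B. wd x y < R"
        using Eub[OF tj[OF t] tk[of t]] unfolding unif_bounded_def by blast
      show ?thesis unfolding unif_bounded_def
      proof (intro exI[of _ R] conjI ballI)
        show "0 < R" by fact
        fix Q x y assume Q: "Q \<in> C t" and xy: "x \<in> Q" "y \<in> Q"
        then obtain A B where AB: "Q = (\<lambda>e. gF A \<otimes>\<^bsub>G\<^esub> e) ` B \<inter> P A"
          "B \<in> E (t div Suc n) (t mod Suc n)" unfolding C_def by blast
        obtain b1 b2 where b: "b1 \<in> B" "b2 \<in> B" "x = gF A \<otimes>\<^bsub>G\<^esub> b1" "y = gF A \<otimes>\<^bsub>G\<^esub> b2" "x \<in> P A"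
          using xy AB by blast
        have "wd x y = wd b1 b2" unfolding wd_def b(3,4)
          using word_dist_left[OF grp, of "gF A" b1 b2 S] gF[OF b(5)] CW[OF t AB(2)] b by blast
        then show "wd x y < R" using R b AB by auto
      qed
    qed
    have Cd: "r_disjoint wd (r (Suc t)) (C t)" if t: "t < N" for t
      unfolding r_disjoint_def
    proof (intro ballI impI)
      fix Q1 Q2 assume Q: "Q1 \<in> C t" "Q2 \<in> C t" "Q1 \<noteq> Q2"
      define j where "j = t div Suc n"
      define k where "k = t mod Suc n"
      have jm: "j \<le> m" using tj[OF t] by (simp add: j_def)
      obtain A1 B1 where AB1: "Q1 = (\<lambda>e. gF A1 \<otimes>\<^bsub>G\<^esub> e) ` B1 \<inter> P A1" "A1 \<in> F j" "B1 \<in> E j k"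
        using Q unfolding C_def j_def k_def by blast
      obtain A2 B2 where AB2: "Q2 = (\<lambda>e. gF A2 \<otimes>\<^bsub>G\<^esub> e) ` B2 \<inter> P A2" "A2 \<in> F j" "B2 \<in> E j k"
        using Q unfolding C_def j_def k_def by blast
      define c where "c = r (K j)"
      have rc: "r (Suc t) \<le> c" unfolding c_def j_def using tK by (intro rmono) auto
      have "ereal (c + 1) \<le> set_dist wd Q1 Q2"
      proof (cases "A1 = A2")
        case True
        then have B12: "B1 \<noteq> B2" using Q AB1 AB2 by auto
        have "ereal (\<rho> j) < set_dist wd B1 B2"
          using Edis[OF jm tk[of t]] AB1 AB2 B12 unfolding r_disjoint_def k_def by blast
        also have "\<dots> \<le> set_dist wd Q1 Q2"
        proof (rule set_dist_ge)
          fix x y assume xy: "x \<in> Q1" "y \<in> Q2"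
          obtain b1 b2 where b: "b1 \<in> B1" "b2 \<in> B2" "x = gF A1 \<otimes>\<^bsub>G\<^esub> b1" "y = gF A1 \<otimes>\<^bsub>G\<^esub> b2" "x \<in> P A1"
            using xy AB1 AB2 True by blast
          have "wd x y = wd b1 b2" unfolding wd_def b(3,4)
            using word_dist_left[OF grp, of "gF A1" b1 b2 S] gF[OF b(5)]
              CW[OF t, of B1] CW[OF t, of B2] AB1 AB2 b by (auto simp: j_def k_def)
          then show "set_dist wd B1 B2 \<le> ereal (wd x y)" using b by (simp add: set_dist_le_pt)
        qed
        finally show ?thesis by (simp add: \<rho>_def c_def)
      next
        case False
        have sd: "ereal (s j) < set_dist dM A1 A2"
          using F jm AB1 AB2 False unfolding r_disjoint_def by blast
        show ?thesis
        proof (rule set_dist_ge)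
          fix x y assume xy: "x \<in> Q1" "y \<in> Q2"
          then have xP: "x \<in> carrier G" "\<phi> x x0 \<in> A1" and yP: "y \<in> carrier G" "\<phi> y x0 \<in> A2"
            using AB1 AB2 unfolding P_def by auto
          have "ereal (s j) < ereal (dM (\<phi> x x0) (\<phi> y x0))"
            using sd set_dist_le_pt[OF xP(2) yP(2), of dM] by order
          then have "s j < dM (\<phi> x x0) (\<phi> y x0)" by simp
          also have "\<dots> \<le> L * wd x y" using lip xP yP by blast
          finally have "L * (c + 1) < L * wd x y" unfolding s_def c_def by linarith
          then have "c + 1 < wd x y" using Lpos by simp
          then show "ereal (c + 1) \<le> ereal (wd x y)" by simp
        qed
      qed
      moreover have "ereal (r (Suc t)) < ereal (c + 1)" using rc by simp
      ultimately show "ereal (r (Suc t)) < set_dist wd Q1 Q2"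
        using order_less_le_trans by blast
    qed
    have Ccov: "carrier G \<subseteq> (\<Union>t<N. \<Union>(C t))"
    proof
      fix g assume g: "g \<in> carrier G"
      have "\<phi> g x0 \<in> M" using act_closed[OF act g x0] .
      then obtain j A where jA: "j \<le> m" "A \<in> F j" "\<phi> g x0 \<in> A" using Fcov by blast
      have gP: "g \<in> P A" using g jA by (simp add: P_def)
      define g0 where "g0 = gF A"
      have g0: "g0 \<in> carrier G" "\<phi> g0 x0 \<in> A" using gF[OF gP] by (auto simp: g0_def)
      define w where "w = inv\<^bsub>G\<^esub> g0 \<otimes>\<^bsub>G\<^esub> g"
      have wc: "w \<in> carrier G" using g g0 by (simp add: w_def)
      have gw: "g = g0 \<otimes>\<^bsub>G\<^esub> w" using g g0 by (simp add: w_def m_assoc[symmetric])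
      have "\<phi> g x0 = \<phi> g0 (\<phi> w x0)" using group_action.composition_rule[OF act x0 g0(1) wc] gw by simp
      then have "dM x0 (\<phi> w x0) = dM (\<phi> g0 x0) (\<phi> g x0)"
        using iso g0(1) x0 act_closed[OF act wc x0] by simp
      also have "\<dots> < D j" using D[OF jA(1)] jA g0 by blast
      finally have "w \<in> W j" using wc unfolding W_def quasi_stabilizer_def by simp
      then obtain k B where kB: "k \<le> n" "B \<in> E j k" "w \<in> B" using Ecov[OF jA(1)] by blast
      define t where "t = j * Suc n + k"
      have t2: "t = k + j * Suc n" by (simp add: t_def)
      have kl: "k < Suc n" using kB(1) by simp
      have "(k + j * Suc n) div Suc n = j + k div Suc n" by (rule div_mult_self1) simp
      also have "k div Suc n = 0" using kl by (rule div_less)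
      finally have td: "t div Suc n = j" unfolding t2 by simp
      have "(k + j * Suc n) mod Suc n = k mod Suc n" by (rule mod_mult_self1)
      also have "k mod Suc n = k" using kl by (rule mod_less)
      finally have tm: "t mod Suc n = k" unfolding t2 .
      note tdiv = td tm
      have jj: "j * Suc n \<le> m * Suc n" using jA(1) by (rule mult_le_mono1)
      have NN: "N = m * Suc n + Suc n" by (simp add: N_def)
      have tN: "t < N" using jj kB(1) unfolding NN t_def by linarith
      have "g \<in> (\<lambda>e. gF A \<otimes>\<^bsub>G\<^esub> e) ` B \<inter> P A" using gw kB gP by (auto simp: g0_def)
      moreover have "(\<lambda>e. gF A \<otimes>\<^bsub>G\<^esub> e) ` B \<inter> P A \<in> C t" unfolding C_def tdiv using jA kB by blast
      ultimately show "g \<in> (\<Union>t<N. \<Union>(C t))" using tN by blast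
    qed
    obtain XX where XX: "XX 0 = {carrier G}"
      "\<forall>i\<in>{1..N}. r_decomposable wd (r i) (XX (i-1)) (XX i)" "unif_bounded wd (XX N)"
      using peel[of N wd C r "carrier G"] Cb Cd Ccov by blast
    show "\<exists>n XX. XX 0 = {carrier G} \<and>
       (\<forall>i\<in>{1..n}. r_decomposable (word_dist G S) (r i) (XX (i - 1)) (XX i)) \<and>
       unif_bounded (word_dist G S) (XX n)"
      using XX unfolding wd_def by blast
  qed
qed

end
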